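(* Let $p$ be one of $(123,\emptyset,\{0,1,2\})$, $(123,\emptyset,\{0,1,3\})$, $(132,\emptyset,\{0,1,2\})$, $(132,\emptyset,\{0,1,3\})$, $(132,\emptyset,\{0,2,3\})$, $(132,\emptyset,\{1,2,3\})$, or any pattern in the same symmetry class as one of these. Then for all $n\ge3$, $a_n(p)=\frac56\,n!$.
   Context: For $n\ge1$, $\mathcal S_n$ is the set of permutations $\pi=\pi_1\cdots\pi_n$ of $[n]$. A bi-vincular pattern of length $k$ is a triple $p=(\sigma,X,Y)$ with $\sigma\in\mathcal S_k$ and $X,Y\subseteq\{0,1,\dots,k\}$. A permutation $\pi\in\mathcal S_n$ contains $p$ if there are indices $1\le i_1<\dots<i_k\le n$ such that $(\pi_{i_1},\dots,\pi_{i_k})$ is order-isomorphic to $\sigma$ and, letting $j_1<\dots<j_k$ be the values $\pi_{i_1},\dots,\pi_{i_k}$ sorted increasingly and setting $i_0=j_0=0$, $i_{k+1}=j_{k+1}=n+1$, one has $i_{x+1}=i_x+1$ for all $x\in X$ and $j_{y+1}=j_y+1$ for all $y\in Y$. Otherwise $\pi$ avoids $p$; $a_n(p)$ is the number of $\pi\in\mathcal S_n$ avoiding $p$. Symmetries: $p^{i}=(\sigma^{-1},Y,X)$, $p^{r}=(\sigma^{r},\{k-x:x\in X\},Y)$, $p^{c}=(\sigma^{c},X,\{k-y:y\in Y\})$ with $\sigma^r_j=\sigma_{k+1-j}$, $\sigma^c_j=k+1-\sigma_j$; the symmetry class of $p$ consists of all patterns obtained from $p$ by finitely many applications of these maps.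 *)

theory Defs
  imports Complex_Main
begin

text \<open>Permutations of [n] as lists (one-line notation); entry i (1-based) is w ! (i-1).\<close>
definition perms :: "nat \<Rightarrow> nat list set" where
  "perms n = {w. length w = n \<and> distinct w \<and> set w = {1..n}}"

type_synonym bvpat = "nat list \<times> nat set \<times> nat set"

definition is_bvpat :: "bvpat \<Rightarrow> bool" where
  "is_bvpat p = (case p of (\<sigma>, X, Y) \<Rightarrow>
     \<sigma> \<in> perms (length \<sigma>) \<and> X \<subseteq> {0..length \<sigma>} \<and> Y \<subseteq> {0..length \<sigma>})"

text \<open>Containment. ii gives the chosen positions i_1<...<i_k; the extended sequences
  with i_0 = j_0 = 0 and i_(k+1) = j_(k+1) = n+1 are ext_i and ext_j.\<close>
definition ext_i :: "nat \<Rightarrow> nat \<Rightarrow> (nat \<Rightarrow> nat) \<Rightarrow> nat \<Rightarrow> nat" where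
  "ext_i n k ii a = (if a = 0 then 0 else if a = k + 1 then n + 1 else ii a)"

definition ext_j :: "nat list \<Rightarrow> nat \<Rightarrow> (nat \<Rightarrow> nat) \<Rightarrow> nat \<Rightarrow> nat" where
  "ext_j w k ii b = (if b = 0 then 0 else if b = k + 1 then length w + 1
      else sort (map (\<lambda>a. w ! (ii a - 1)) [1..<k+1]) ! (b - 1))"

definition contains :: "nat list \<Rightarrow> bvpat \<Rightarrow> bool" where
  "contains w p = (case p of (\<sigma>, X, Y) \<Rightarrow>
     (let k = length \<sigma>; n = length w in
      \<exists>ii :: nat \<Rightarrow> nat.
        (\<forall>a\<in>{1..k}. 1 \<le> ii a \<and> ii a \<le> n) \<and>
        (\<forall>a\<in>{1..k}. \<forall>b\<in>{1..k}. a < b \<longrightarrow> ii a < ii b) \<and>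
        (\<forall>a\<in>{1..k}. \<forall>b\<in>{1..k}.
            (w ! (ii a - 1) < w ! (ii b - 1)) = (\<sigma> ! (a - 1) < \<sigma> ! (b - 1))) \<and>
        (\<forall>x\<in>X. ext_i n k ii (x + 1) = ext_i n k ii x + 1) \<and>
        (\<forall>y\<in>Y. ext_j w k ii (y + 1) = ext_j w k ii y + 1)))"

definition avoids :: "nat list \<Rightarrow> bvpat \<Rightarrow> bool" where
  "avoids w p = (\<not> contains w p)"

definition av_count :: "nat \<Rightarrow> bvpat \<Rightarrow> nat" where
  "av_count n p = card {w \<in> perms n. avoids w p}"

definition perm_inverse :: "nat list \<Rightarrow> nat list" where
  "perm_inverse \<sigma> = map (\<lambda>j. THE a. a \<in> {1..length \<sigma>} \<and> \<sigma> ! (a - 1) = j) [1..<length \<sigma> + 1]"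

definition sym_i :: "bvpat \<Rightarrow> bvpat" where
  "sym_i p = (case p of (\<sigma>, X, Y) \<Rightarrow> (perm_inverse \<sigma>, Y, X))"

definition sym_r :: "bvpat \<Rightarrow> bvpat" where
  "sym_r p = (case p of (\<sigma>, X, Y) \<Rightarrow> (rev \<sigma>, (\<lambda>x. length \<sigma> - x) ` X, Y))"

definition sym_c :: "bvpat \<Rightarrow> bvpat" where
  "sym_c p = (case p of (\<sigma>, X, Y) \<Rightarrow>
     (map (\<lambda>v. length \<sigma> + 1 - v) \<sigma>, X, (\<lambda>y. length \<sigma> - y) ` Y))"

inductive_set sym_class :: "bvpat \<Rightarrow> bvpat set" for p :: bvpat where
  base: "p \<in> sym_class p"
| inv: "q \<in> sym_class p \<Longrightarrow> sym_i q \<in> sym_class p"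
| rev: "q \<in> sym_class p \<Longrightarrow> sym_r q \<in> sym_class p"
| comp: "q \<in> sym_class p \<Longrightarrow> sym_c q \<in> sym_class p"

end

theory Submission
  imports Defs "HOL-Combinatorics.Multiset_Permutations"
begin


definition Ord :: "(nat \<Rightarrow> nat) \<Rightarrow> nat \<Rightarrow> nat \<Rightarrow> nat \<Rightarrow> bool" where
  "Ord x a b c = (x a < x b \<and> x b < x c)"

lemma card_inv:
  assumes "\<And>w. w \<in> P \<Longrightarrow> g w \<in> P \<and> g (g w) = w"
    and "\<And>w. w \<in> P \<Longrightarrow> (g w \<in> A) = (w \<in> B)" and "A \<subseteq> P" and "B \<subseteq> P"
  shows "card A = card B"
proof -
  have "inj_on g B" by (metis assms(1,4) inj_onI subsetD)
  moreover have "g ` B = A"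
  proof
    show "g ` B \<subseteq> A" using assms by blast
    show "A \<subseteq> g ` B"
    proof
      fix x assume x: "x \<in> A"
      then have "x \<in> P" using assms(3) by blast
      then have "g x \<in> P" "g (g x) = x" using assms(1) by auto
      then have "g x \<in> B" using assms(2)[of "g x"] x by auto
      then show "x \<in> g ` B" using \<open>g (g x) = x\<close> by (metis imageI)
    qed
  qed
  ultimately show ?thesis by (metis card_image)
qed

lemma count6:
  fixes P :: "'w set" and T :: "'w \<Rightarrow> nat \<Rightarrow> nat"
  assumes fin: "finite P"
    and dist: "\<And>w. w\<in>P \<Longrightarrow> T w 1 \<noteq> T w 2 \<and> T w 1 \<noteq> T w 3 \<and> T w 2 \<noteq> T w 3"
    and g1: "\<And>w. w\<in>P \<Longrightarrow> g1 w \<in> P \<and> g1 (g1 w) = w \<and> T (g1 w) 1 = T w 2 \<and> T (g1 w) 2 = T w 1 \<and> T (g1 w) 3 = T w 3"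
    and g2: "\<And>w. w\<in>P \<Longrightarrow> g2 w \<in> P \<and> g2 (g2 w) = w \<and> T (g2 w) 1 = T w 1 \<and> T (g2 w) 2 = T w 3 \<and> T (g2 w) 3 = T w 2"
    and abc: "a \<in> {1,2,3}" "b \<in> {1,2,3}" "c \<in> {1,2,3}" "a \<noteq> b" "a \<noteq> c" "b \<noteq> c"
  shows "6 * card {w\<in>P. Ord (T w) a b c} = card P"
proof -
  define A where "A = (\<lambda>a b c. {w\<in>P. Ord (T w) a b c})"
  have sub: "\<And>a b c. A a b c \<subseteq> P" unfolding A_def by auto
  have g1': "\<And>w. w\<in>P \<Longrightarrow> g1 w \<in> P \<and> g1 (g1 w) = w" using g1 by blast
  have g2': "\<And>w. w\<in>P \<Longrightarrow> g2 w \<in> P \<and> g2 (g2 w) = w" using g2 by blast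
  have e1: "card (A 1 2 3) = card (A 2 1 3)"
  proof (rule card_inv[OF g1' _ sub sub])
    fix w assume w: "w \<in> P"
    show "(g1 w \<in> A 1 2 3) = (w \<in> A 2 1 3)"
      using g1[OF w] w unfolding A_def Ord_def by auto
  qed
  have e2: "card (A 1 2 3) = card (A 1 3 2)"
  proof (rule card_inv[OF g2' _ sub sub])
    fix w assume w: "w \<in> P"
    show "(g2 w \<in> A 1 2 3) = (w \<in> A 1 3 2)"
      using g2[OF w] w unfolding A_def Ord_def by auto
  qed
  have e3: "card (A 2 1 3) = card (A 3 1 2)"
  proof (rule card_inv[OF g2' _ sub sub])
    fix w assume w: "w \<in> P"
    show "(g2 w \<in> A 2 1 3) = (w \<in> A 3 1 2)"
      using g2[OF w] w unfolding A_def Ord_def by auto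
  qed
  have e4: "card (A 1 3 2) = card (A 2 3 1)"
  proof (rule card_inv[OF g1' _ sub sub])
    fix w assume w: "w \<in> P"
    show "(g1 w \<in> A 1 3 2) = (w \<in> A 2 3 1)"
      using g1[OF w] w unfolding A_def Ord_def by auto
  qed
  have e5: "card (A 3 1 2) = card (A 3 2 1)"
  proof (rule card_inv[OF g1' _ sub sub])
    fix w assume w: "w \<in> P"
    show "(g1 w \<in> A 3 1 2) = (w \<in> A 3 2 1)"
      using g1[OF w] w unfolding A_def Ord_def by auto
  qed
  have fA: "\<And>a b c. finite (A a b c)" using sub fin by (meson finite_subset)
  have U: "P = A 1 2 3 \<union> (A 1 3 2 \<union> (A 2 1 3 \<union> (A 2 3 1 \<union> (A 3 1 2 \<union> A 3 2 1))))"
  proof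
    show "P \<subseteq> A 1 2 3 \<union> (A 1 3 2 \<union> (A 2 1 3 \<union> (A 2 3 1 \<union> (A 3 1 2 \<union> A 3 2 1))))"
    proof
      fix w assume w: "w \<in> P"
      have "T w 1 < T w 2 \<and> T w 2 < T w 3 \<or> T w 1 < T w 3 \<and> T w 3 < T w 2 \<or> T w 2 < T w 1 \<and> T w 1 < T w 3 \<or>
            T w 2 < T w 3 \<and> T w 3 < T w 1 \<or> T w 3 < T w 1 \<and> T w 1 < T w 2 \<or> T w 3 < T w 2 \<and> T w 2 < T w 1"
        using dist[OF w] by linarith
      then show "w \<in> A 1 2 3 \<union> (A 1 3 2 \<union> (A 2 1 3 \<union> (A 2 3 1 \<union> (A 3 1 2 \<union> A 3 2 1))))"
        unfolding A_def Ord_def using w by blast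
    qed
    show "A 1 2 3 \<union> (A 1 3 2 \<union> (A 2 1 3 \<union> (A 2 3 1 \<union> (A 3 1 2 \<union> A 3 2 1)))) \<subseteq> P"
      using sub by (intro Un_least) auto
  qed
  have c5: "card (A 3 1 2 \<union> A 3 2 1) = card (A 3 1 2) + card (A 3 2 1)"
    by (rule card_Un_disjoint) (simp_all add: fA, auto simp: A_def Ord_def)
  have c4: "card (A 2 3 1 \<union> (A 3 1 2 \<union> A 3 2 1)) = card (A 2 3 1) + card (A 3 1 2 \<union> A 3 2 1)"
    by (rule card_Un_disjoint) (simp_all add: fA, auto simp: A_def Ord_def)
  have c3: "card (A 2 1 3 \<union> (A 2 3 1 \<union> (A 3 1 2 \<union> A 3 2 1))) = card (A 2 1 3) + card (A 2 3 1 \<union> (A 3 1 2 \<union> A 3 2 1))"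
    by (rule card_Un_disjoint) (simp_all add: fA, auto simp: A_def Ord_def)
  have c2: "card (A 1 3 2 \<union> (A 2 1 3 \<union> (A 2 3 1 \<union> (A 3 1 2 \<union> A 3 2 1)))) = card (A 1 3 2) + card (A 2 1 3 \<union> (A 2 3 1 \<union> (A 3 1 2 \<union> A 3 2 1)))"
    by (rule card_Un_disjoint) (simp_all add: fA, auto simp: A_def Ord_def)
  have c1: "card (A 1 2 3 \<union> (A 1 3 2 \<union> (A 2 1 3 \<union> (A 2 3 1 \<union> (A 3 1 2 \<union> A 3 2 1))))) = card (A 1 2 3) + card (A 1 3 2 \<union> (A 2 1 3 \<union> (A 2 3 1 \<union> (A 3 1 2 \<union> A 3 2 1))))"
    by (rule card_Un_disjoint) (simp_all add: fA, auto simp: A_def Ord_def)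
  have cP: "card P = card (A 1 2 3) + (card (A 1 3 2) + (card (A 2 1 3) + (card (A 2 3 1) + (card (A 3 1 2) + card (A 3 2 1)))))"
    using U c1 c2 c3 c4 c5 by simp
  have six: "6 * card (A 1 2 3) = card P" using cP e1 e2 e3 e4 e5 by linarith
  have "(a,b,c) \<in> {(1,2,3),(1,3,2),(2,1,3),(2,3,1),(3,1,2),(3,2,1)}" using abc by auto
  then have "card (A a b c) = card (A 1 2 3)" using e1 e2 e3 e4 e5
    by (elim insertE emptyE) simp_all
  then show ?thesis using six by (simp add: A_def)
qed




lemma perms_eq: "perms n = permutations_of_set {1..n}"
  unfolding perms_def permutations_of_set_def
  by (auto dest: distinct_card)

lemma card_perms: "card (perms n) = fact n"
  by (simp add: perms_eq)

lemma finite_perms: "finite (perms n)"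
  by (simp add: perms_eq)

lemma l3: "length (\<tau>::nat list) = 3 \<Longrightarrow> \<exists>x y z. \<tau> = [x,y,z]"
  by (cases \<tau>; cases "tl \<tau>"; cases "tl (tl \<tau>)") (auto simp: numeral_3_eq_3)

lemma perms3: "\<tau> \<in> perms 3 \<Longrightarrow> \<tau> \<in> {[1,2,3],[1,3,2],[2,1,3],[2,3,1],[3,1,2],[3,2,1]}"
proof -
  assume t: "\<tau> \<in> perms 3"
  then have l: "length \<tau> = 3" and d: "distinct \<tau>" and s: "set \<tau> = {1..3}" by (auto simp: perms_def)
  obtain x y z where e: "\<tau> = [x,y,z]" using l3[OF l] by blast
  have o: "{1..3::nat} = {1,2,3}" by auto
  have x: "x \<in> {1,2,3}" "y \<in> {1,2,3}" "z \<in> {1,2,3}" using s unfolding e o by auto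
  have dd: "x \<noteq> y" "x \<noteq> z" "y \<noteq> z" using d e by auto
  show ?thesis unfolding e using x dd
    by (elim insertE emptyE) simp_all
qed

lemma perms3_mem: "\<tau> \<in> {[1,2,3],[1,3,2],[2,1,3],[2,3,1],[3,1,2],[3,2,1]} \<Longrightarrow> \<tau> \<in> perms 3"
proof -
  have o: "{1..3::nat} = {1,2,3}" by auto
  assume "\<tau> \<in> {[1,2,3],[1,3,2],[2,1,3],[2,3,1],[3,1,2],[3,2,1]}"
  then show "\<tau> \<in> perms 3" unfolding perms_def o
    by (elim insertE emptyE) (simp_all add: insert_commute)
qed

lemma perm_inverse_perms:
  assumes "\<sigma> \<in> perms k"
  shows "perm_inverse \<sigma> \<in> perms k"
proof -
  have l: "length \<sigma> = k" and d: "distinct \<sigma>" and s: "set \<sigma> = {1..k}" using assms by (auto simp: perms_def)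
  define f where "f = (\<lambda>j. THE a. a \<in> {1..length \<sigma>} \<and> \<sigma> ! (a - 1) = j)"
  have ex1: "\<exists>!a. a \<in> {1..length \<sigma>} \<and> \<sigma> ! (a - 1) = j" if j: "j \<in> {1..k}" for j
  proof -
    from j s obtain i where i: "i < length \<sigma>" "\<sigma> ! i = j" by (metis in_set_conv_nth)
    show ?thesis
    proof (rule ex1I[of _ "i+1"])
      show "i + 1 \<in> {1..length \<sigma>} \<and> \<sigma> ! (i + 1 - 1) = j" using i by auto
      fix a assume a: "a \<in> {1..length \<sigma>} \<and> \<sigma> ! (a - 1) = j"
      then have "a - 1 < length \<sigma>" by auto
      with a i d have "a - 1 = i" using nth_eq_iff_index_eq by metis
      then show "a = i + 1" using a by auto
    qed
  qed
  have fp: "f j \<in> {1..k} \<and> \<sigma> ! (f j - 1) = j" if "j \<in> {1..k}" for j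
    using theI'[OF ex1[OF that]] l unfolding f_def by auto
  have inj: "inj_on f {1..k}"
    by (rule inj_onI) (metis fp)
  have img: "f ` {1..k} = {1..k}"
  proof
    show "f ` {1..k} \<subseteq> {1..k}" using fp by auto
    show "{1..k} \<subseteq> f ` {1..k}"
    proof
      fix a assume a: "a \<in> {1..k}"
      define j where "j = \<sigma> ! (a - 1)"
      have jk: "j \<in> {1..k}" using a s l unfolding j_def by (metis atLeastAtMost_iff diff_less le_eq_less_or_eq less_one nth_mem not_le zero_less_one le_trans)
      have "f j = a" using the1_equality[OF ex1[OF jk]] a l unfolding f_def j_def by auto
      then show "a \<in> f ` {1..k}" using jk by blast
    qed
  qed
  have pi: "perm_inverse \<sigma> = map f [1..<k+1]" unfolding perm_inverse_def f_def l ..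
  have su: "set [1..<k+1] = {1..k}" by auto
  show ?thesis unfolding pi perms_def
    using inj img su by (simp add: distinct_map)
qed

lemma imgs: "(\<lambda>x::nat. 3 - x) ` {0,1,2} = {1,2,3}" "(\<lambda>x::nat. 3 - x) ` {0,1,3} = {0,2,3}"
  "(\<lambda>x::nat. 3 - x) ` {0,2,3} = {0,1,3}" "(\<lambda>x::nat. 3 - x) ` {1,2,3} = {0,1,2}"
  by auto

lemma imgS: "S \<in> {{0,1,2},{0,1,3},{0,2,3},{1,2,3}} \<Longrightarrow> (\<lambda>x::nat. 3 - x) ` S \<in> {{0,1,2},{0,1,3},{0,2,3},{1,2,3}}"
  apply (elim insertE emptyE)
  apply (simp_all only: imgs)
  apply (intro insertI1 insertI2)+
  done

definition good :: "bvpat \<Rightarrow> bool" where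
  "good q = (\<exists>\<tau> S. \<tau> \<in> perms 3 \<and> S \<in> {{0,1,2},{0,1,3},{0,2,3},{1,2,3}} \<and>
     (q = (\<tau>, {}, S) \<or> q = (\<tau>, S, {})))"

lemma goodI1: "\<tau> \<in> perms 3 \<Longrightarrow> S \<in> {{0,1,2},{0,1,3},{0,2,3},{1,2,3}} \<Longrightarrow> good (\<tau>, {}, S)"
  unfolding good_def by blast
lemma goodI2: "\<tau> \<in> perms 3 \<Longrightarrow> S \<in> {{0,1,2},{0,1,3},{0,2,3},{1,2,3}} \<Longrightarrow> good (\<tau>, S, {})"
  unfolding good_def by blast

lemma good_class: "q \<in> sym_class p \<Longrightarrow> good p \<Longrightarrow> good q"
proof (induction rule: sym_class.induct)
  case base then show ?case .
next
  case (inv q)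
  then obtain \<tau> S where t: "\<tau> \<in> perms 3" and S: "S \<in> {{0,1,2},{0,1,3},{0,2,3},{1,2,3}}"
     and q: "q = (\<tau>, {}, S) \<or> q = (\<tau>, S, {})" unfolding good_def by blast
  have it: "perm_inverse \<tau> \<in> perms 3" using perm_inverse_perms[OF t] .
  from q show ?case
  proof
    assume q1: "q = (\<tau>, {}, S)"
    have "sym_i q = (perm_inverse \<tau>, S, {})" using q1 by (simp add: sym_i_def)
    then show ?case using goodI2[OF it S] by simp
  next
    assume q1: "q = (\<tau>, S, {})"
    have "sym_i q = (perm_inverse \<tau>, {}, S)" using q1 by (simp add: sym_i_def)
    then show ?case using goodI1[OF it S] by simp
  qed
next
  case (rev q)
  then obtain \<tau> S where t: "\<tau> \<in> perms 3" and S: "S \<in> {{0,1,2},{0,1,3},{0,2,3},{1,2,3}}"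
     and q: "q = (\<tau>, {}, S) \<or> q = (\<tau>, S, {})" unfolding good_def by blast
  have l: "length \<tau> = 3" using t by (simp add: perms_def)
  have rt: "rev \<tau> \<in> perms 3" using t by (simp add: perms_def)
  have S': "(\<lambda>x. 3 - x) ` S \<in> {{0,1,2},{0,1,3},{0,2,3},{1,2,3}}" using imgS[OF S] .
  from q show ?case
  proof
    assume q1: "q = (\<tau>, {}, S)"
    have "sym_r q = (rev \<tau>, {}, S)" using q1 by (simp add: sym_r_def l)
    then show ?case using goodI1[OF rt S] by simp
  next
    assume q1: "q = (\<tau>, S, {})"
    have "sym_r q = (rev \<tau>, (\<lambda>x. 3 - x) ` S, {})" using q1 by (simp add: sym_r_def l)
    then show ?case using goodI2[OF rt S'] by simp
  qed
next
  case (comp q)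
  then obtain \<tau> S where t: "\<tau> \<in> perms 3" and S: "S \<in> {{0,1,2},{0,1,3},{0,2,3},{1,2,3}}"
     and q: "q = (\<tau>, {}, S) \<or> q = (\<tau>, S, {})" unfolding good_def by blast
  have l: "length \<tau> = 3" using t by (simp add: perms_def)
  have ct: "map (\<lambda>v. 3 + 1 - v) \<tau> \<in> perms 3" 
    using perms3[OF t] by (elim insertE emptyE) (simp_all add: perms3_mem)
  have S': "(\<lambda>x. 3 - x) ` S \<in> {{0,1,2},{0,1,3},{0,2,3},{1,2,3}}" using imgS[OF S] .
  from q show ?case
  proof
    assume q1: "q = (\<tau>, {}, S)"
    have "sym_c q = (map (\<lambda>v. 3 + 1 - v) \<tau>, {}, (\<lambda>x. 3 - x) ` S)" using q1 by (simp add: sym_c_def l)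
    then show ?case using goodI1[OF ct S'] by simp
  next
    assume q1: "q = (\<tau>, S, {})"
    have "sym_c q = (map (\<lambda>v. 3 + 1 - v) \<tau>, S, {})" using q1 by (simp add: sym_c_def l)
    then show ?case using goodI2[OF ct S] by simp
  qed
qed

lemma good_init:
  assumes "p \<in> sym_class ([1,2,3], {}, {0,1,2}) \<or> p \<in> sym_class ([1,2,3], {}, {0,1,3}) \<or>
           p \<in> sym_class ([1,3,2], {}, {0,1,2}) \<or> p \<in> sym_class ([1,3,2], {}, {0,1,3}) \<or>
           p \<in> sym_class ([1,3,2], {}, {0,2,3}) \<or> p \<in> sym_class ([1,3,2], {}, {1,2,3})"
  shows "good p"
proof -
  have a: "[1,2,3] \<in> perms 3" "[1,3,2] \<in> perms 3" by (auto intro: perms3_mem)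
  have g: "good (\<tau>, {}, S)" if "\<tau> \<in> perms 3" "S \<in> {{0,1,2},{0,1,3},{0,2,3},{1,2,3}}" for \<tau> S
    unfolding good_def using that by blast
  have s: "{0,1,2} \<in> {{0,1,2},{0,1,3},{0,2,3},{1,2,3::nat}}" "{0,1,3} \<in> {{0,1,2},{0,1,3},{0,2,3},{1,2,3::nat}}"
    "{0,2,3} \<in> {{0,1,2},{0,1,3},{0,2,3},{1,2,3::nat}}" "{1,2,3} \<in> {{0,1,2},{0,1,3},{0,2,3},{1,2,3::nat}}" by (intro insertI1 insertI2)+
  show ?thesis using assms
    by (elim disjE) (erule good_class, rule g, rule a, rule s)+
qed




lemma one_three: "{1..3::nat} = {1,2,3}" by auto

definition gapP :: "nat set \<Rightarrow> nat \<Rightarrow> (nat \<Rightarrow> nat) \<Rightarrow> bool" where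
 "gapP S n d = (1 \<le> d 1 \<and> d 1 < d 2 \<and> d 2 < d 3 \<and> d 3 \<le> n \<and>
    (\<forall>E::nat\<Rightarrow>nat. E 0 = 0 \<longrightarrow> E 4 = n+1 \<longrightarrow>
       ((\<forall>y\<in>S. E (y+1) = E y + 1) \<longleftrightarrow> (E 1 = d 1 \<and> E 2 = d 2 \<and> E 3 = d 3))))"

lemma g1: "n \<ge> 3 \<Longrightarrow> gapP {0,1,2} n (\<lambda>a. a)"
  unfolding gapP_def by (auto simp: eval_nat_numeral)
lemma g2: "n \<ge> 3 \<Longrightarrow> gapP {0,1,3} n (\<lambda>a. if a = 3 then n else a)"
  unfolding gapP_def by (auto simp: eval_nat_numeral)
lemma g3: "n \<ge> 3 \<Longrightarrow> gapP {0,2,3} n (\<lambda>a. if a = 1 then 1 else n + a - 3)"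
  unfolding gapP_def by (auto simp: eval_nat_numeral)
lemma g4: "n \<ge> 3 \<Longrightarrow> gapP {1,2,3} n (\<lambda>a. n + a - 3)"
  unfolding gapP_def by (auto simp: eval_nat_numeral)

lemma gaps:
  assumes "S \<in> {{0,1,2},{0,1,3},{0,2,3},{1,2,3}}" "n \<ge> 3"
  shows "\<exists>d. gapP S n d"
  using assms(1) g1[OF assms(2)] g2[OF assms(2)] g3[OF assms(2)] g4[OF assms(2)]
  by (elim insertE emptyE) blast+

lemma ordlem:
  assumes "\<tau> \<in> perms 3"
  shows "\<exists>a b c. a \<in> {1,2,3} \<and> b \<in> {1,2,3} \<and> c \<in> {1,2,3} \<and> a \<noteq> b \<and> a \<noteq> c \<and> b \<noteq> c \<and>
     (\<forall>x::nat\<Rightarrow>nat. x 1 \<noteq> x 2 \<and> x 1 \<noteq> x 3 \<and> x 2 \<noteq> x 3 \<longrightarrow>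
       ((\<forall>a\<in>{1..3}. \<forall>b\<in>{1..3}. (x a < x b) = (\<tau> ! (a - 1) < \<tau> ! (b - 1))) \<longleftrightarrow> Ord x a b c))"
  using perms3[OF assms]
  apply (simp only: one_three)
  apply (elim insertE emptyE)
       apply (rule exI[of _ 1], rule exI[of _ 2], rule exI[of _ 3], force simp: Ord_def)
      apply (rule exI[of _ 1], rule exI[of _ 3], rule exI[of _ 2], force simp: Ord_def)
     apply (rule exI[of _ 2], rule exI[of _ 1], rule exI[of _ 3], force simp: Ord_def)
    apply (rule exI[of _ 3], rule exI[of _ 1], rule exI[of _ 2], force simp: Ord_def)
   apply (rule exI[of _ 2], rule exI[of _ 3], rule exI[of _ 1], force simp: Ord_def)
  apply (rule exI[of _ 3], rule exI[of _ 2], rule exI[of _ 1], force simp: Ord_def)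
  done




lemma contains3:
  assumes "length \<sigma> = 3"
  shows "contains w (\<sigma>, X, Y) \<longleftrightarrow> (\<exists>ii :: nat \<Rightarrow> nat.
        (\<forall>a\<in>{1..3}. 1 \<le> ii a \<and> ii a \<le> length w) \<and>
        (\<forall>a\<in>{1..3}. \<forall>b\<in>{1..3}. a < b \<longrightarrow> ii a < ii b) \<and>
        (\<forall>a\<in>{1..3}. \<forall>b\<in>{1..3}.
            (w ! (ii a - 1) < w ! (ii b - 1)) = (\<sigma> ! (a - 1) < \<sigma> ! (b - 1))) \<and>
        (\<forall>x\<in>X. ext_i (length w) 3 ii (x + 1) = ext_i (length w) 3 ii x + 1) \<and>
        (\<forall>y\<in>Y. ext_j w 3 ii (y + 1) = ext_j w 3 ii y + 1))"
  using assms by (simp add: contains_def Let_def)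

lemma pos_contains:
  assumes t: "\<tau> \<in> perms 3" and lw: "length w = n"
    and gd: "gapP X n d"
  shows "contains w (\<tau>, X, {}) \<longleftrightarrow>
    (\<forall>a\<in>{1..3}. \<forall>b\<in>{1..3}. (w ! (d a - 1) < w ! (d b - 1)) = (\<tau> ! (a - 1) < \<tau> ! (b - 1)))"
proof -
  have d: "1 \<le> d 1" "d 1 < d 2" "d 2 < d 3" "d 3 \<le> n"
    and hX: "\<forall>E::nat\<Rightarrow>nat. E 0 = 0 \<longrightarrow> E 4 = n+1 \<longrightarrow>
       ((\<forall>y\<in>X. E (y+1) = E y + 1) \<longleftrightarrow> (E 1 = d 1 \<and> E 2 = d 2 \<and> E 3 = d 3))"
    using gd unfolding gapP_def by blast+
  have l: "length \<tau> = 3" using t by (simp add: perms_def)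
  have E: "(\<forall>x\<in>X. ext_i n 3 ii (x + 1) = ext_i n 3 ii x + 1) \<longleftrightarrow> (ii 1 = d 1 \<and> ii 2 = d 2 \<and> ii 3 = d 3)" for ii
    using hX[rule_format, of "ext_i n 3 ii"] by (simp add: ext_i_def)
  show ?thesis
  proof
    assume "contains w (\<tau>, X, {})"
    then obtain ii where o: "\<forall>a\<in>{1..3}. \<forall>b\<in>{1..3}.
            (w ! (ii a - 1) < w ! (ii b - 1)) = (\<tau> ! (a - 1) < \<tau> ! (b - 1))"
      and x: "\<forall>x\<in>X. ext_i n 3 ii (x + 1) = ext_i n 3 ii x + 1"
      unfolding contains3[OF l] lw by blast
    from x E[of ii] have "ii 1 = d 1" "ii 2 = d 2" "ii 3 = d 3" by simp_all
    then show "\<forall>a\<in>{1..3}. \<forall>b\<in>{1..3}. (w ! (d a - 1) < w ! (d b - 1)) = (\<tau> ! (a - 1) < \<tau> ! (b - 1))"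
      using o unfolding one_three by simp
  next
    assume o: "\<forall>a\<in>{1..3}. \<forall>b\<in>{1..3}. (w ! (d a - 1) < w ! (d b - 1)) = (\<tau> ! (a - 1) < \<tau> ! (b - 1))"
    have x: "\<forall>x\<in>X. ext_i n 3 d (x + 1) = ext_i n 3 d x + 1" using E[of d] by simp
    show "contains w (\<tau>, X, {})"
      unfolding contains3[OF l] lw
      apply (rule exI[of _ d])
      using o x d unfolding one_three by (intro conjI) simp_all
  qed
qed




definition pos :: "nat list \<Rightarrow> nat \<Rightarrow> nat" where
  "pos w v = (THE i. i < length w \<and> w ! i = v)"

lemma pos_eq: "distinct w \<Longrightarrow> i < length w \<Longrightarrow> pos w (w ! i) = i"
  unfolding pos_def by (rule the_equality) (auto simp: nth_eq_iff_index_eq)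

lemma pos_prop: "distinct w \<Longrightarrow> v \<in> set w \<Longrightarrow> pos w v < length w \<and> w ! pos w v = v"
  by (metis in_set_conv_nth pos_eq)

lemma sort3:
  fixes x y z :: nat
  assumes "x < y" "y < z"
  shows "sort [x,y,z] = [x,y,z]" "sort [x,z,y] = [x,y,z]" "sort [y,x,z] = [x,y,z]"
        "sort [y,z,x] = [x,y,z]" "sort [z,x,y] = [x,y,z]" "sort [z,y,x] = [x,y,z]"
  using assms by auto

lemma valkey:
  fixes v1 v2 v3 :: nat and d :: "nat \<Rightarrow> nat"
  assumes t: "\<tau> \<in> perms 3" and d: "d 1 < d 2" "d 2 < d 3"
    and v: "v1 \<noteq> v2" "v1 \<noteq> v3" "v2 \<noteq> v3"
  shows "((\<forall>a\<in>{1..3}. \<forall>b\<in>{1..3}. ([v1,v2,v3] ! (a - 1) < [v1,v2,v3] ! (b - 1)) = (\<tau> ! (a - 1) < \<tau> ! (b - 1)))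
      \<and> sort [v1,v2,v3] ! 0 = d 1 \<and> sort [v1,v2,v3] ! 1 = d 2 \<and> sort [v1,v2,v3] ! 2 = d 3)
     \<longleftrightarrow> (v1 = d (\<tau> ! 0) \<and> v2 = d (\<tau> ! 1) \<and> v3 = d (\<tau> ! 2))"
proof -
  have "v1<v2\<and>v2<v3 \<or> v1<v3\<and>v3<v2 \<or> v2<v1\<and>v1<v3 \<or> v2<v3\<and>v3<v1 \<or> v3<v1\<and>v1<v2 \<or> v3<v2\<and>v2<v1"
    using v by linarith
  then show ?thesis
  proof (elim disjE)
    assume c: "v1<v2\<and>v2<v3"
    then have s: "sort [v1,v2,v3] = [v1,v2,v3]" using sort3(1)[of v1 v2 v3] by blast
    show ?thesis using perms3[OF t] c d unfolding s one_three
      by (elim insertE emptyE) (simp_all add: conj_ac)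
  next
    assume c: "v1<v3\<and>v3<v2"
    then have s: "sort [v1,v2,v3] = [v1,v3,v2]" using sort3(2)[of v1 v3 v2] by blast
    show ?thesis using perms3[OF t] c d unfolding s one_three
      by (elim insertE emptyE) (simp_all add: conj_ac)
  next
    assume c: "v2<v1\<and>v1<v3"
    then have s: "sort [v1,v2,v3] = [v2,v1,v3]" using sort3(3)[of v2 v1 v3] by blast
    show ?thesis using perms3[OF t] c d unfolding s one_three
      by (elim insertE emptyE) (simp_all add: conj_ac)
  next
    assume c: "v2<v3\<and>v3<v1"
    then have s: "sort [v1,v2,v3] = [v2,v3,v1]" using sort3(5)[of v2 v3 v1] by blast
    show ?thesis using perms3[OF t] c d unfolding s one_three
      by (elim insertE emptyE) (simp_all add: conj_ac)
  next
    assume c: "v3<v1\<and>v1<v2"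
    then have s: "sort [v1,v2,v3] = [v3,v1,v2]" using sort3(4)[of v3 v1 v2] by blast
    show ?thesis using perms3[OF t] c d unfolding s one_three
      by (elim insertE emptyE) (simp_all add: conj_ac)
  next
    assume c: "v3<v2\<and>v2<v1"
    then have s: "sort [v1,v2,v3] = [v3,v2,v1]" using sort3(6)[of v3 v2 v1] by blast
    show ?thesis using perms3[OF t] c d unfolding s one_three
      by (elim insertE emptyE) (simp_all add: conj_ac)
  qed
qed




lemma map3: "map f [1..<3+1] = [f 1, f 2, f (3::nat)]"
  by (simp add: eval_nat_numeral upt_rec)

lemma tau_facts:
  assumes "\<tau> \<in> perms 3"
  shows "\<tau> ! 0 \<in> {1,2,3} \<and> \<tau> ! 1 \<in> {1,2,3} \<and> \<tau> ! 2 \<in> {1,2,3} \<and> \<tau> ! 0 \<noteq> \<tau> ! 1 \<and> \<tau> ! 0 \<noteq> \<tau> ! 2 \<and> \<tau> ! 1 \<noteq> \<tau> ! 2"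
  using perms3[OF assms] by (elim insertE emptyE) simp_all

lemma val_contains:
  assumes t: "\<tau> \<in> perms 3" and w: "w \<in> perms n" and gd: "gapP Y n d"
  shows "contains w (\<tau>, {}, Y) \<longleftrightarrow> Ord (\<lambda>a. pos w (d a)) (\<tau> ! 0) (\<tau> ! 1) (\<tau> ! 2)"
proof -
  have d: "1 \<le> d 1" "d 1 < d 2" "d 2 < d 3" "d 3 \<le> n"
    and hY: "\<forall>E::nat\<Rightarrow>nat. E 0 = 0 \<longrightarrow> E 4 = n+1 \<longrightarrow>
       ((\<forall>y\<in>Y. E (y+1) = E y + 1) \<longleftrightarrow> (E 1 = d 1 \<and> E 2 = d 2 \<and> E 3 = d 3))"
    using gd unfolding gapP_def by blast+
  have l: "length \<tau> = 3" using t by (simp add: perms_def)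
  have lw: "length w = n" and dw: "distinct w" and sw: "set w = {1..n}" using w by (auto simp: perms_def)
  have E: "(\<forall>y\<in>Y. ext_j w 3 ii (y + 1) = ext_j w 3 ii y + 1) \<longleftrightarrow>
     (sort [w ! (ii 1 - 1), w ! (ii 2 - 1), w ! (ii 3 - 1)] ! 0 = d 1 \<and>
      sort [w ! (ii 1 - 1), w ! (ii 2 - 1), w ! (ii 3 - 1)] ! 1 = d 2 \<and>
      sort [w ! (ii 1 - 1), w ! (ii 2 - 1), w ! (ii 3 - 1)] ! 2 = d 3)" for ii
  proof -
    have e0: "ext_j w 3 ii 0 = 0" and e4: "ext_j w 3 ii 4 = n + 1" by (simp_all add: ext_j_def lw)
    have e1: "ext_j w 3 ii 1 = sort [w ! (ii 1 - 1), w ! (ii 2 - 1), w ! (ii 3 - 1)] ! 0"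
      and e2: "ext_j w 3 ii 2 = sort [w ! (ii 1 - 1), w ! (ii 2 - 1), w ! (ii 3 - 1)] ! 1"
      and e3: "ext_j w 3 ii 3 = sort [w ! (ii 1 - 1), w ! (ii 2 - 1), w ! (ii 3 - 1)] ! 2"
      by (simp_all only: ext_j_def map3) simp_all
    show ?thesis using hY[rule_format, OF e0 e4] unfolding e1 e2 e3 .
  qed
  have tf: "\<tau> ! 0 \<in> {1,2,3} \<and> \<tau> ! 1 \<in> {1,2,3} \<and> \<tau> ! 2 \<in> {1,2,3} \<and> \<tau> ! 0 \<noteq> \<tau> ! 1 \<and> \<tau> ! 0 \<noteq> \<tau> ! 2 \<and> \<tau> ! 1 \<noteq> \<tau> ! 2"
    using tau_facts[OF t] .
  have dk: "d k \<in> set w" if "k \<in> {1,2,3}" for k using that d sw by auto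
  have dinj: "d j \<noteq> d k" if "j \<in> {1,2,3}" "k \<in> {1,2,3}" "j \<noteq> k" for j k
    using that d by auto
  show ?thesis
  proof
    assume "contains w (\<tau>, {}, Y)"
    then obtain ii where b: "\<forall>a\<in>{1..3}. 1 \<le> ii a \<and> ii a \<le> length w"
      and inc: "\<forall>a\<in>{1..3}. \<forall>b\<in>{1..3}. a < b \<longrightarrow> ii a < ii b"
      and o: "\<forall>a\<in>{1..3}. \<forall>b\<in>{1..3}. (w ! (ii a - 1) < w ! (ii b - 1)) = (\<tau> ! (a - 1) < \<tau> ! (b - 1))"
      and y: "\<forall>y\<in>Y. ext_j w 3 ii (y + 1) = ext_j w 3 ii y + 1"
      unfolding contains3[OF l] by blast
    have b': "1 \<le> ii 1" "ii 3 \<le> n" "ii 1 < ii 2" "ii 2 < ii 3" using b inc lw unfolding one_three by auto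
    have v: "w ! (ii 1 - 1) \<noteq> w ! (ii 2 - 1)" "w ! (ii 1 - 1) \<noteq> w ! (ii 3 - 1)" "w ! (ii 2 - 1) \<noteq> w ! (ii 3 - 1)"
      using b' dw lw by (simp_all add: nth_eq_iff_index_eq)
    have o': "\<forall>a\<in>{1..3}. \<forall>b\<in>{1..3}. ([w ! (ii 1 - 1), w ! (ii 2 - 1), w ! (ii 3 - 1)] ! (a - 1) < [w ! (ii 1 - 1), w ! (ii 2 - 1), w ! (ii 3 - 1)] ! (b - 1)) = (\<tau> ! (a - 1) < \<tau> ! (b - 1))"
      using o unfolding one_three by simp
    have vv: "w ! (ii 1 - 1) = d (\<tau> ! 0)" "w ! (ii 2 - 1) = d (\<tau> ! 1)" "w ! (ii 3 - 1) = d (\<tau> ! 2)"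
      using valkey[OF t d(2,3) v] o' y E[of ii] by simp_all
    have "pos w (d (\<tau> ! 0)) = ii 1 - 1" "pos w (d (\<tau> ! 1)) = ii 2 - 1" "pos w (d (\<tau> ! 2)) = ii 3 - 1"
      using pos_eq[OF dw, of "ii 1 - 1"] pos_eq[OF dw, of "ii 2 - 1"] pos_eq[OF dw, of "ii 3 - 1"] vv b' lw
      by simp_all
    then show "Ord (\<lambda>a. pos w (d a)) (\<tau> ! 0) (\<tau> ! 1) (\<tau> ! 2)"
      unfolding Ord_def using b' by (simp; linarith)
  next
    assume O: "Ord (\<lambda>a. pos w (d a)) (\<tau> ! 0) (\<tau> ! 1) (\<tau> ! 2)"
    define ii where "ii = (\<lambda>a. pos w (d (\<tau> ! (a - 1))) + 1)"
    have pp: "pos w (d (\<tau> ! k)) < n \<and> w ! pos w (d (\<tau> ! k)) = d (\<tau> ! k)" if "k \<in> {0,1,2}" for k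
      using pos_prop[OF dw dk] tf that lw by auto
    have vv: "w ! (ii 1 - 1) = d (\<tau> ! 0)" "w ! (ii 2 - 1) = d (\<tau> ! 1)" "w ! (ii 3 - 1) = d (\<tau> ! 2)"
      using pp[of 0] pp[of 1] pp[of 2] unfolding ii_def by simp_all
    have v: "w ! (ii 1 - 1) \<noteq> w ! (ii 2 - 1)" "w ! (ii 1 - 1) \<noteq> w ! (ii 3 - 1)" "w ! (ii 2 - 1) \<noteq> w ! (ii 3 - 1)"
      unfolding vv using tf dinj by meson+
    have k: "(\<forall>a\<in>{1..3}. \<forall>b\<in>{1..3}. ([w ! (ii 1 - 1), w ! (ii 2 - 1), w ! (ii 3 - 1)] ! (a - 1) < [w ! (ii 1 - 1), w ! (ii 2 - 1), w ! (ii 3 - 1)] ! (b - 1)) = (\<tau> ! (a - 1) < \<tau> ! (b - 1)))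
      \<and> sort [w ! (ii 1 - 1), w ! (ii 2 - 1), w ! (ii 3 - 1)] ! 0 = d 1 \<and> sort [w ! (ii 1 - 1), w ! (ii 2 - 1), w ! (ii 3 - 1)] ! 1 = d 2 \<and> sort [w ! (ii 1 - 1), w ! (ii 2 - 1), w ! (ii 3 - 1)] ! 2 = d 3"
      using valkey[OF t d(2,3) v] vv by blast
    have bnd: "1 \<le> ii a \<and> ii a \<le> n" if "a \<in> {1,2,3}" for a
      using pp[of "a - 1"] that unfolding ii_def by auto
    have inc: "ii 1 < ii 2" "ii 2 < ii 3" using O unfolding Ord_def ii_def by simp_all
    show "contains w (\<tau>, {}, Y)"
      unfolding contains3[OF l]
    proof (rule exI[of _ ii], intro conjI)
      show "\<forall>a\<in>{1..3}. 1 \<le> ii a \<and> ii a \<le> length w" using bnd lw unfolding one_three by blast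
      show "\<forall>a\<in>{1..3}. \<forall>b\<in>{1..3}. a < b \<longrightarrow> ii a < ii b" using inc unfolding one_three by auto
      show "\<forall>a\<in>{1..3}. \<forall>b\<in>{1..3}. (w ! (ii a - 1) < w ! (ii b - 1)) = (\<tau> ! (a - 1) < \<tau> ! (b - 1))"
        using k unfolding one_three by simp
      show "\<forall>x\<in>{}. ext_i (length w) 3 ii (x + 1) = ext_i (length w) 3 ii x + 1" by simp
      show "\<forall>y\<in>Y. ext_j w 3 ii (y + 1) = ext_j w 3 ii y + 1" using E[of ii] k by blast
    qed
  qed
qed




definition swv :: "nat \<Rightarrow> nat \<Rightarrow> nat \<Rightarrow> nat" where
  "swv u v x = (if x = u then v else if x = v then u else x)"

lemma swv_inv: "swv u v (swv u v x) = x" by (simp add: swv_def)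

lemma swap_val:
  assumes w: "w \<in> perms n" and u: "u \<in> {1..n}" and v: "v \<in> {1..n}" and uv: "u \<noteq> v"
  shows "map (swv u v) w \<in> perms n" "map (swv u v) (map (swv u v) w) = w"
    "pos (map (swv u v) w) u = pos w v" "pos (map (swv u v) w) v = pos w u"
    "\<And>x. x \<in> {1..n} \<Longrightarrow> x \<noteq> u \<Longrightarrow> x \<noteq> v \<Longrightarrow> pos (map (swv u v) w) x = pos w x"
proof -
  have lw: "length w = n" and dw: "distinct w" and sw: "set w = {1..n}" using w by (auto simp: perms_def)
  have inj: "inj (swv u v)" by (metis injI swv_inv)
  have img: "swv u v ` {1..n} = {1..n}"
  proof
    show "swv u v ` {1..n} \<subseteq> {1..n}" using u v by (auto simp: swv_def)
    show "{1..n} \<subseteq> swv u v ` {1..n}"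
    proof
      fix x assume x: "x \<in> {1..n}"
      have "swv u v x \<in> {1..n}" using x u v by (auto simp: swv_def)
      then show "x \<in> swv u v ` {1..n}" by (metis image_eqI swv_inv)
    qed
  qed
  have dw': "distinct (map (swv u v) w)" using dw inj_on_subset[OF inj subset_UNIV] by (simp add: distinct_map)
  show "map (swv u v) w \<in> perms n" using lw dw' img sw by (simp add: perms_def)
  show "map (swv u v) (map (swv u v) w) = w" by (simp add: comp_def swv_inv)
  have P: "pos (map (swv u v) w) (swv u v y) = pos w y" if y: "y \<in> {1..n}" for y
  proof -
    have "pos w y < length w \<and> w ! pos w y = y" using pos_prop[OF dw] y sw by auto
    then have "map (swv u v) w ! pos w y = swv u v y" by simp
    then show ?thesis using pos_eq[OF dw', of "pos w y"] \<open>pos w y < length w \<and> w ! pos w y = y\<close> by simp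
  qed
  show "pos (map (swv u v) w) u = pos w v" using P[OF v] uv by (simp add: swv_def)
  show "pos (map (swv u v) w) v = pos w u" using P[OF u] uv by (simp add: swv_def)
  show "pos (map (swv u v) w) x = pos w x" if "x \<in> {1..n}" "x \<noteq> u" "x \<noteq> v" for x
  proof -
    have "swv u v x = x" using that by (simp add: swv_def)
    then show ?thesis using P[OF that(1)] by simp
  qed
qed

definition swp :: "nat \<Rightarrow> nat \<Rightarrow> nat list \<Rightarrow> nat list" where
  "swp i j w = w[i := w ! j, j := w ! i]"

lemma swap_pos:
  assumes w: "w \<in> perms n" and i: "i < n" and j: "j < n" and ij: "i \<noteq> j"
  shows "swp i j w \<in> perms n" "swp i j (swp i j w) = w"
    "swp i j w ! i = w ! j" "swp i j w ! j = w ! i"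
    "\<And>k. k \<noteq> i \<Longrightarrow> k \<noteq> j \<Longrightarrow> swp i j w ! k = w ! k"
proof -
  have lw: "length w = n" and dw: "distinct w" and sw: "set w = {1..n}" using w by (auto simp: perms_def)
  show "swp i j w \<in> perms n" using lw dw sw i j by (simp add: perms_def swp_def)
  show "swp i j (swp i j w) = w" using lw i j ij
    by (auto simp: swp_def list_eq_iff_nth_eq nth_list_update)
  show "swp i j w ! i = w ! j" using lw i j ij by (simp add: swp_def nth_list_update)
  show "swp i j w ! j = w ! i" using lw i j ij by (simp add: swp_def nth_list_update)
  show "\<And>k. k \<noteq> i \<Longrightarrow> k \<noteq> j \<Longrightarrow> swp i j w ! k = w ! k" by (simp add: swp_def nth_list_update)
qed

definition OE :: "nat list \<Rightarrow> nat \<Rightarrow> nat \<Rightarrow> nat \<Rightarrow> bool" where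
  "OE \<tau> a b c = (\<forall>x::nat\<Rightarrow>nat. x 1 \<noteq> x 2 \<and> x 1 \<noteq> x 3 \<and> x 2 \<noteq> x 3 \<longrightarrow>
       ((\<forall>a\<in>{1..3}. \<forall>b\<in>{1..3}. (x a < x b) = (\<tau> ! (a - 1) < \<tau> ! (b - 1))) \<longleftrightarrow> Ord x a b c))"

lemma ordlem': "\<tau> \<in> perms 3 \<Longrightarrow> \<exists>a b c. a \<in> {1,2,3} \<and> b \<in> {1,2,3} \<and> c \<in> {1,2,3} \<and> a \<noteq> b \<and> a \<noteq> c \<and> b \<noteq> c \<and> OE \<tau> a b c"
  unfolding OE_def by (rule ordlem)

lemma count_contains:
  assumes g: "good p" and n: "n \<ge> 3"
  shows "6 * card {w \<in> perms n. contains w p} = fact n"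
proof -
  obtain \<tau> S where t: "\<tau> \<in> perms 3" and S: "S \<in> {{0,1,2},{0,1,3},{0,2,3},{1,2,3}}"
     and q: "p = (\<tau>, {}, S) \<or> p = (\<tau>, S, {})" using g unfolding good_def by blast
  obtain d where gd: "gapP S n d" using gaps[OF S n] by blast
  have d: "1 \<le> d 1" "d 1 < d 2" "d 2 < d 3" "d 3 \<le> n" using gd unfolding gapP_def by blast+
  have tf: "\<tau> ! 0 \<in> {1,2,3} \<and> \<tau> ! 1 \<in> {1,2,3} \<and> \<tau> ! 2 \<in> {1,2,3} \<and> \<tau> ! 0 \<noteq> \<tau> ! 1 \<and> \<tau> ! 0 \<noteq> \<tau> ! 2 \<and> \<tau> ! 1 \<noteq> \<tau> ! 2"
    using tau_facts[OF t] .
  from q show ?thesis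
  proof
    assume p: "p = (\<tau>, {}, S)"
    define T where "T = (\<lambda>(w::nat list) (a::nat). pos w (d a))"
    have eq: "{w \<in> perms n. contains w p} = {w \<in> perms n. Ord (T w) (\<tau> ! 0) (\<tau> ! 1) (\<tau> ! 2)}"
    proof (rule Collect_cong, rule conj_cong[OF refl])
      fix w assume w: "w \<in> perms n"
      show "contains w p = Ord (T w) (\<tau> ! 0) (\<tau> ! 1) (\<tau> ! 2)"
        unfolding p T_def by (rule val_contains[OF t w gd])
    qed
    have dn: "d 1 \<in> {1..n}" "d 2 \<in> {1..n}" "d 3 \<in> {1..n}" using d by auto
    have dne: "d 1 \<noteq> d 2" "d 2 \<noteq> d 3" "d 1 \<noteq> d 3" "d 3 \<noteq> d 1" "d 3 \<noteq> d 2" "d 2 \<noteq> d 1" using d by auto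
    have "6 * card {w \<in> perms n. Ord (T w) (\<tau> ! 0) (\<tau> ! 1) (\<tau> ! 2)} = card (perms n)"
    proof (rule count6[of _ _ "map (swv (d 1) (d 2))" "map (swv (d 2) (d 3))"])
      show "finite (perms n)" by (rule finite_perms)
      fix w assume w: "w \<in> perms n"
      have dw: "distinct w" and sw: "set w = {1..n}" using w by (auto simp: perms_def)
      have pp: "w ! pos w (d k) = d k" if "k \<in> {1,2,3}" for k using pos_prop[OF dw, of "d k"] sw dn that by auto
      show "T w 1 \<noteq> T w 2 \<and> T w 1 \<noteq> T w 3 \<and> T w 2 \<noteq> T w 3"
      proof -
        have q: "w ! pos w (d 1) = d 1" "w ! pos w (d 2) = d 2" "w ! pos w (d 3) = d 3" by (simp_all add: pp)
        have "pos w (d 1) \<noteq> pos w (d 2)"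
        proof
          assume "pos w (d 1) = pos w (d 2)" then have "d 1 = d 2" using q by metis
          then show False using d by simp
        qed
        moreover have "pos w (d 1) \<noteq> pos w (d 3)"
        proof
          assume "pos w (d 1) = pos w (d 3)" then have "d 1 = d 3" using q by metis
          then show False using d by simp
        qed
        moreover have "pos w (d 2) \<noteq> pos w (d 3)"
        proof
          assume "pos w (d 2) = pos w (d 3)" then have "d 2 = d 3" using q by metis
          then show False using d by simp
        qed
        ultimately show ?thesis unfolding T_def by blast
      qed
      show "map (swv (d 1) (d 2)) w \<in> perms n \<and> map (swv (d 1) (d 2)) (map (swv (d 1) (d 2)) w) = w \<and>
         T (map (swv (d 1) (d 2)) w) 1 = T w 2 \<and> T (map (swv (d 1) (d 2)) w) 2 = T w 1 \<and> T (map (swv (d 1) (d 2)) w) 3 = T w 3"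
        using swap_val[OF w dn(1) dn(2) dne(1)] swap_val(5)[OF w dn(1) dn(2) dne(1) dn(3) dne(4) dne(5)] unfolding T_def by simp
      show "map (swv (d 2) (d 3)) w \<in> perms n \<and> map (swv (d 2) (d 3)) (map (swv (d 2) (d 3)) w) = w \<and>
         T (map (swv (d 2) (d 3)) w) 1 = T w 1 \<and> T (map (swv (d 2) (d 3)) w) 2 = T w 3 \<and> T (map (swv (d 2) (d 3)) w) 3 = T w 2"
        using swap_val[OF w dn(2) dn(3) dne(2)] swap_val(5)[OF w dn(2) dn(3) dne(2) dn(1) dne(1) dne(3)] unfolding T_def by simp
    qed (use tf in auto)
    then show ?thesis unfolding eq card_perms .
  next
    assume p: "p = (\<tau>, S, {})"
    obtain a b c where abc: "a \<in> {1,2,3}" "b \<in> {1,2,3}" "c \<in> {1,2,3}" "a \<noteq> b" "a \<noteq> c" "b \<noteq> c"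
      and oe0: "OE \<tau> a b c"
      using ordlem'[OF t] by blast
    have oe: "\<forall>x::nat\<Rightarrow>nat. x 1 \<noteq> x 2 \<and> x 1 \<noteq> x 3 \<and> x 2 \<noteq> x 3 \<longrightarrow>
       ((\<forall>a\<in>{1..3}. \<forall>b\<in>{1..3}. (x a < x b) = (\<tau> ! (a - 1) < \<tau> ! (b - 1))) \<longleftrightarrow> Ord x a b c)"
      using oe0 unfolding OE_def .
    define T where "T = (\<lambda>(w::nat list) (a::nat). w ! (d a - 1))"
    have dist: "T w 1 \<noteq> T w 2 \<and> T w 1 \<noteq> T w 3 \<and> T w 2 \<noteq> T w 3" if w: "w \<in> perms n" for w
    proof -
      have lw: "length w = n" and dw: "distinct w" using w by (auto simp: perms_def)
      show ?thesis unfolding T_def using d lw dw by (simp add: nth_eq_iff_index_eq, arith)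
    qed
    have eq: "{w \<in> perms n. contains w p} = {w \<in> perms n. Ord (T w) a b c}"
    proof (rule Collect_cong, rule conj_cong[OF refl])
      fix w assume w: "w \<in> perms n"
      have lw: "length w = n" using w by (simp add: perms_def)
      show "contains w p = Ord (T w) a b c"
        using pos_contains[OF t lw gd] oe[rule_format, OF dist[OF w]] unfolding p T_def by (rule trans)
    qed
    have i: "d 1 - 1 < n" "d 2 - 1 < n" "d 3 - 1 < n" and ne: "d 1 - 1 \<noteq> d 2 - 1" "d 2 - 1 \<noteq> d 3 - 1"
      "d 1 - 1 \<noteq> d 3 - 1" using d by auto
    have "6 * card {w \<in> perms n. Ord (T w) a b c} = card (perms n)"
    proof (rule count6[of _ _ "swp (d 1 - 1) (d 2 - 1)" "swp (d 2 - 1) (d 3 - 1)"])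
      show "finite (perms n)" by (rule finite_perms)
      fix w assume w: "w \<in> perms n"
      show "T w 1 \<noteq> T w 2 \<and> T w 1 \<noteq> T w 3 \<and> T w 2 \<noteq> T w 3" using dist[OF w] .
      show "swp (d 1 - 1) (d 2 - 1) w \<in> perms n \<and> swp (d 1 - 1) (d 2 - 1) (swp (d 1 - 1) (d 2 - 1) w) = w \<and>
         T (swp (d 1 - 1) (d 2 - 1) w) 1 = T w 2 \<and> T (swp (d 1 - 1) (d 2 - 1) w) 2 = T w 1 \<and> T (swp (d 1 - 1) (d 2 - 1) w) 3 = T w 3"
        using swap_pos[OF w i(1) i(2) ne(1)] ne unfolding T_def by simp
      show "swp (d 2 - 1) (d 3 - 1) w \<in> perms n \<and> swp (d 2 - 1) (d 3 - 1) (swp (d 2 - 1) (d 3 - 1) w) = w \<and>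
         T (swp (d 2 - 1) (d 3 - 1) w) 1 = T w 1 \<and> T (swp (d 2 - 1) (d 3 - 1) w) 2 = T w 3 \<and> T (swp (d 2 - 1) (d 3 - 1) w) 3 = T w 2"
        using swap_pos[OF w i(2) i(3) ne(2)] ne unfolding T_def by simp
    qed (use abc in auto)
    then show ?thesis unfolding eq card_perms .
  qed
qed

theorem mainTheorem15:
  fixes p :: bvpat and n :: nat
  assumes "p \<in> sym_class ([1,2,3], {}, {0,1,2}) \<or> p \<in> sym_class ([1,2,3], {}, {0,1,3}) \<or>
           p \<in> sym_class ([1,3,2], {}, {0,1,2}) \<or> p \<in> sym_class ([1,3,2], {}, {0,1,3}) \<or>
           p \<in> sym_class ([1,3,2], {}, {0,2,3}) \<or> p \<in> sym_class ([1,3,2], {}, {1,2,3})"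
    and "n \<ge> 3"
  shows "real (av_count n p) = 5 / 6 * fact n"
proof -
  have c: "6 * card {w \<in> perms n. contains w p} = fact n"
    using count_contains[OF good_init[OF assms(1)] assms(2)] .
  have "{w \<in> perms n. avoids w p} = perms n - {w \<in> perms n. contains w p}"
    by (auto simp: avoids_def)
  then have "av_count n p = card (perms n) - card {w \<in> perms n. contains w p}"
    unfolding av_count_def by (simp add: card_Diff_subset finite_perms)
  then have "av_count n p = fact n - card {w \<in> perms n. contains w p}"
    by (simp add: card_perms)
  moreover have "card {w \<in> perms n. contains w p} \<le> fact n" using c by linarith
  ultimately have "real (av_count n p) = real (fact n) - real (card {w \<in> perms n. contains w p})"
    by simp
  also have "\<dots> = 5 / 6 * real (fact n)"
  proof -
    have "real (6 * card {w \<in> perms n. contains w p}) = real (fact n)" using c by simp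
    then show ?thesis by simp
  qed
  finally show ?thesis by (simp add: of_nat_fact)
qed


end
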